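(* In $\mathcal F_8$, the hyperelliptic divisor $H_h$ and the unigonal divisor $H_u$ have nonempty intersection, and $H_u$ has no self-intersection in the sense of Looijenga, i.e. $H_u^{(2)}=\emptyset$.
   Context: $\Lambda_8=U^2\oplus E_8\oplus E_7\oplus A_1$ (negative definite root lattices), signature $(2,18)$; $\mathcal D_{\Lambda_8}=\{[z]\in\mathbb P(\Lambda_8\otimes\mathbb C):z^2=0,z\bar z>0\}$, $\mathcal D_v=\{[z]\in\mathcal D_{\Lambda_8}:z\cdot v=0\}$, $\Gamma=O(\Lambda_8)$, $\mathcal F_8=\Gamma\backslash\mathcal D_{\Lambda_8}$. For primitive $v\in\Lambda_8$, $\operatorname{div}(v)$ is the positive generator of $\langle v,\Lambda_8\rangle$; $v$ is unigonal if $v^2=-2,\operatorname{div}(v)=2$, hyperelliptic if $v^2=-6,\operatorname{div}(v)=2$. $H_u$ (resp. $H_h$) is the image in $\mathcal F_8$ of $\bigcup\mathcal D_v$ over unigonal (resp. hyperelliptic) $v$. For $m\ge1$, the Looijenga self-intersection $H_u^{(m)}$ is the image in $\mathcal F_8$ of $\bigcup\mathcal D_{v_1}\cap\cdots\cap\mathcal D_{v_m}$ over all $m$-tuples of linearly independent vectors $v_1,\dots,v_m$ in the $\Gamma$-orbit of a unigonal vector. *)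

theory Defs
  imports Complex_Main
begin

text \<open>Coordinates 0..19 (vectors are functions nat => _ supported on {..<20}):
  0,1: first U; 2,3: second U; 4..11: E8; 12..18: E7; 19: A1.
  Root lattices are negative definite: simple roots have square -2 and adjacent
  simple roots have product +1 (negated Cartan matrix).\<close>

definition rk :: nat where "rk = 20"

definition gram_edges :: "(nat \<times> nat) set" where
  "gram_edges = {(0,1),(2,3),
     (4,5),(5,6),(6,7),(7,8),(8,9),(9,10),(8,11),
     (12,13),(13,14),(14,15),(15,16),(16,17),(15,18)}"

definition gram :: "nat \<Rightarrow> nat \<Rightarrow> int" where
  "gram i j = (if i < rk \<and> j < rk then
      (if i = j then (if i < 4 then 0 else -2)
       else if (i,j) \<in> gram_edges \<or> (j,i) \<in> gram_edges then 1 else 0)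
    else 0)"

definition Lam :: "(nat \<Rightarrow> int) set" where
  "Lam = {v. \<forall>i\<ge>rk. v i = 0}"

definition bil :: "(nat \<Rightarrow> int) \<Rightarrow> (nat \<Rightarrow> int) \<Rightarrow> int" where
  "bil x y = (\<Sum>i<rk. \<Sum>j<rk. x i * gram i j * y j)"

definition bilC :: "(nat \<Rightarrow> complex) \<Rightarrow> (nat \<Rightarrow> complex) \<Rightarrow> complex" where
  "bilC z w = (\<Sum>i<rk. \<Sum>j<rk. z i * of_int (gram i j) * w j)"

definition herm :: "(nat \<Rightarrow> complex) \<Rightarrow> (nat \<Rightarrow> complex) \<Rightarrow> complex" where
  "herm z w = bilC z (\<lambda>i. cnj (w i))"

definition LamC :: "(nat \<Rightarrow> complex) set" where
  "LamC = {z. \<forall>i\<ge>rk. z i = 0}"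

definition embC :: "(nat \<Rightarrow> int) \<Rightarrow> (nat \<Rightarrow> complex)" where
  "embC v = (\<lambda>i. of_int (v i))"

definition primitive :: "(nat \<Rightarrow> int) \<Rightarrow> bool" where
  "primitive v \<longleftrightarrow> v \<in> Lam \<and> v \<noteq> (\<lambda>_. 0) \<and>
     \<not> (\<exists>n::int. \<exists>w\<in>Lam. n > 1 \<and> v = (\<lambda>i. n * w i))"

definition divisor_is :: "(nat \<Rightarrow> int) \<Rightarrow> int \<Rightarrow> bool" where
  "divisor_is v d \<longleftrightarrow> d > 0 \<and> {bil v x | x. x \<in> Lam} = {d * k | k. True}"

definition unigonal :: "(nat \<Rightarrow> int) \<Rightarrow> bool" where
  "unigonal v \<longleftrightarrow> primitive v \<and> bil v v = -2 \<and> divisor_is v 2"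

definition hyperelliptic :: "(nat \<Rightarrow> int) \<Rightarrow> bool" where
  "hyperelliptic v \<longleftrightarrow> primitive v \<and> bil v v = -6 \<and> divisor_is v 2"

definition act :: "(nat \<Rightarrow> nat \<Rightarrow> int) \<Rightarrow> (nat \<Rightarrow> int) \<Rightarrow> (nat \<Rightarrow> int)" where
  "act g x = (\<lambda>i. if i < rk then (\<Sum>j<rk. g i j * x j) else 0)"

definition actC :: "(nat \<Rightarrow> nat \<Rightarrow> int) \<Rightarrow> (nat \<Rightarrow> complex) \<Rightarrow> (nat \<Rightarrow> complex)" where
  "actC g z = (\<lambda>i. if i < rk then (\<Sum>j<rk. of_int (g i j) * z j) else 0)"

definition Gamma :: "(nat \<Rightarrow> nat \<Rightarrow> int) set" where
  "Gamma = {g. (\<forall>i j. (rk \<le> i \<or> rk \<le> j) \<longrightarrow> g i j = 0) \<and>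
              bij_betw (act g) Lam Lam \<and>
              (\<forall>x\<in>Lam. \<forall>y\<in>Lam. bil (act g x) (act g y) = bil x y)}"

text \<open>Points of D are represented by nonzero vectors z in Lambda_8 (x) C (points of
  the projective space are lines); the conditions are invariant under scaling.\<close>
definition Dvec :: "(nat \<Rightarrow> complex) set" where
  "Dvec = {z. z \<in> LamC \<and> z \<noteq> (\<lambda>_. 0) \<and> bilC z z = 0 \<and> Re (herm z z) > 0}"

definition Dv :: "(nat \<Rightarrow> int) \<Rightarrow> (nat \<Rightarrow> complex) set" where
  "Dv v = {z \<in> Dvec. bilC z (embC v) = 0}"

text \<open>Two representatives give the same point of F_8 = Gamma \ D iff they differ by
  an element of Gamma and a nonzero scalar.\<close>
definition F8rel :: "((nat \<Rightarrow> complex) \<times> (nat \<Rightarrow> complex)) set" where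
  "F8rel = {(z, w). z \<in> Dvec \<and> w \<in> Dvec \<and>
             (\<exists>g\<in>Gamma. \<exists>c::complex. c \<noteq> 0 \<and> w = (\<lambda>i. c * actC g z i))}"

definition F8 :: "(nat \<Rightarrow> complex) set set" where
  "F8 = Dvec // F8rel"

definition F8proj :: "(nat \<Rightarrow> complex) \<Rightarrow> (nat \<Rightarrow> complex) set" where
  "F8proj z = F8rel `` {z}"

definition Hu :: "(nat \<Rightarrow> complex) set set" where
  "Hu = F8proj ` (\<Union>v\<in>{v. unigonal v}. Dv v)"

definition Hh :: "(nat \<Rightarrow> complex) set set" where
  "Hh = F8proj ` (\<Union>v\<in>{v. hyperelliptic v}. Dv v)"

definition unigonal_orbit :: "(nat \<Rightarrow> int) set" where
  "unigonal_orbit = {act g v | g v. g \<in> Gamma \<and> unigonal v}"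

text \<open>Linear independence of v_0,...,v_{m-1} in Lambda_8 (over Z, equivalently over Q).\<close>
definition lin_indep :: "nat \<Rightarrow> (nat \<Rightarrow> nat \<Rightarrow> int) \<Rightarrow> bool" where
  "lin_indep m vs \<longleftrightarrow> (\<forall>c :: nat \<Rightarrow> int.
      (\<forall>i. (\<Sum>k<m. c k * vs k i) = 0) \<longrightarrow> (\<forall>k<m. c k = 0))"

definition Hu_self :: "nat \<Rightarrow> (nat \<Rightarrow> complex) set set" where
  "Hu_self m = F8proj ` (\<Union>vs\<in>{vs. (\<forall>k<m. vs k \<in> unigonal_orbit) \<and> lin_indep m vs}.
                            (\<Inter>k<m. Dv (vs k)) \<inter> Dvec)"

end

theory Submission
  imports Defs
begin

definition Bg :: "(nat \<Rightarrow> 'a::comm_ring_1) \<Rightarrow> (nat \<Rightarrow> 'a) \<Rightarrow> 'a" where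
  "Bg x y = (\<Sum>i<rk. \<Sum>j<rk. x i * of_int (gram i j) * y j)"

lemma Bg_explicit: "Bg x y = x 0 * y 1 + x 1 * y 0 + x 2 * y 3 + x 3 * y 2 + x 4 * y 5 + x 5 * y 4 + x 5 * y 6 + x 6 * y 5 + x 6 * y 7 + x 7 * y 6 + x 7 * y 8 + x 8 * y 7 + x 8 * y 9 + x 9 * y 8 + x 9 * y 10 + x 10 * y 9 + x 8 * y 11 + x 11 * y 8 + x 12 * y 13 + x 13 * y 12 + x 13 * y 14 + x 14 * y 13 + x 14 * y 15 + x 15 * y 14 + x 15 * y 16 + x 16 * y 15 + x 16 * y 17 + x 17 * y 16 + x 15 * y 18 + x 18 * y 15 - 2 * (x 4 * y 4 + x 5 * y 5 + x 6 * y 6 + x 7 * y 7 + x 8 * y 8 + x 9 * y 9 + x 10 * y 10 + x 11 * y 11 + x 12 * y 12 + x 13 * y 13 + x 14 * y 14 + x 15 * y 15 + x 16 * y 16 + x 17 * y 17 + x 18 * y 18 + x 19 * y 19)"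
  unfolding Bg_def rk_def
  by (simp add: eval_nat_numeral sum.lessThan_Suc gram_def gram_edges_def rk_def)

lemma bil_Bg: "bil = Bg"
  by (intro ext) (simp add: bil_def Bg_def)
lemma bilC_Bg: "bilC = Bg"
  by (intro ext) (simp add: bilC_def Bg_def)

lemma Bg_sym: "Bg x y = Bg y x" by (simp add: Bg_explicit algebra_simps)
lemma Bg_add_left: "Bg (\<lambda>i. x i + y i) z = Bg x z + Bg y z" by (simp add: Bg_explicit algebra_simps)
lemma Bg_add_right: "Bg z (\<lambda>i. x i + y i) = Bg z x + Bg z y" by (simp add: Bg_explicit algebra_simps)
lemma Bg_diff_left: "Bg (\<lambda>i. x i - y i) z = Bg x z - Bg y z" by (simp add: Bg_explicit algebra_simps)
lemma Bg_diff_right: "Bg z (\<lambda>i. x i - y i) = Bg z x - Bg z y" by (simp add: Bg_explicit algebra_simps)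
lemma Bg_smult_left: "Bg (\<lambda>i. c * x i) z = c * Bg x z" by (simp add: Bg_explicit algebra_simps)
lemma Bg_smult_right: "Bg z (\<lambda>i. c * x i) = c * Bg z x" by (simp add: Bg_explicit algebra_simps)

lemma Bg_of_real: "Bg (\<lambda>i. of_real (x i)) (\<lambda>i. of_real (y i)) = (of_real (Bg x y) :: complex)"
  by (simp add: Bg_def)
lemma Bg_of_int: "Bg (\<lambda>i. of_int (x i)) (\<lambda>i. of_int (y i)) = (of_int (Bg x y) :: real)"
  by (simp add: Bg_def)

definition h0 :: "nat \<Rightarrow> int" where
  "h0 i = (if i = 12 then 3 else if i = 13 then 4 else if i = 14 then 5 else if i = 15 then 6
     else if i = 16 then 4 else if i = 17 then 2 else if i = 18 then 3 else 0)"
definition e19 :: "nat \<Rightarrow> int" where "e19 i = (if i = 19 then 1 else 0)"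

lemma h0_bil: "Bg h0 x = -2 * x 12" by (simp add: Bg_explicit h0_def)
lemma e19_bil: "Bg e19 x = -2 * x 19" by (simp add: Bg_explicit e19_def)
lemma h0_Lam: "h0 \<in> Lam" by (simp add: Lam_def h0_def rk_def)
lemma e19_Lam: "e19 \<in> Lam" by (simp add: Lam_def e19_def rk_def)

lemma div2_lemma:
  fixes v :: "nat \<Rightarrow> int"
  assumes "\<And>x. Bg v x = -2 * x k" "k < 20"
  shows "divisor_is v 2"
  unfolding divisor_is_def bil_Bg
proof (intro conjI)
  show "{Bg v x |x. x \<in> Lam} = {2 * k |k::int. True}"
  proof (intro set_eqI iffI)
    fix y :: int assume "y \<in> {Bg v x |x. x \<in> Lam}"
    then obtain x where "y = Bg v x" by blast
    then have "y = 2 * (- x k)" using assms by simp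
    then show "y \<in> {2 * k |k::int. True}" by blast
  next
    fix y :: int assume "y \<in> {2 * k |k::int. True}"
    then obtain k' :: int where y: "y = 2 * k'" by blast
    let ?x = "\<lambda>i. if i = k then - k' else 0"
    have "?x \<in> Lam" using assms(2) by (simp add: Lam_def rk_def)
    moreover have "y = Bg v ?x" using assms(1)[of ?x] y by simp
    ultimately show "y \<in> {Bg v x |x. x \<in> Lam}" by blast
  qed
qed simp

lemma hyp_h0: "hyperelliptic h0"
  unfolding hyperelliptic_def
proof (intro conjI)
  show "bil h0 h0 = -6" by (simp add: bil_Bg h0_bil h0_def)
  show "divisor_is h0 2" by (rule div2_lemma[of _ 12]) (simp_all add: h0_bil)
  show "primitive h0"
    unfolding primitive_def
  proof (intro conjI notI)
    show "h0 \<in> Lam" by (rule h0_Lam)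
    assume "h0 = (\<lambda>_. 0)"
    then have "h0 12 = 0" by metis
    then show False by (simp add: h0_def)
  next
    assume "\<exists>n::int. \<exists>w\<in>Lam. n > 1 \<and> h0 = (\<lambda>i. n * w i)"
    then obtain n w where n: "n > 1" and hw: "h0 = (\<lambda>i. n * w i)" by blast
    have "3 = n * w 12" "2 = n * w 17" using fun_cong[OF hw, of 12] fun_cong[OF hw, of 17]
      by (simp_all add: h0_def)
    then have "n * (w 12 - w 17) = 1" by (simp add: algebra_simps)
    then show False using n by (simp add: zmult_eq_1_iff)
  qed
qed

lemma uni_e19: "unigonal e19"
  unfolding unigonal_def
proof (intro conjI)
  show "bil e19 e19 = -2" by (simp add: bil_Bg e19_bil e19_def)
  show "divisor_is e19 2" by (rule div2_lemma[of _ 19]) (simp_all add: e19_bil)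
  show "primitive e19"
    unfolding primitive_def
  proof (intro conjI notI)
    show "e19 \<in> Lam" by (rule e19_Lam)
    assume "e19 = (\<lambda>_. 0)"
    then have "e19 19 = 0" by metis
    then show False by (simp add: e19_def)
  next
    assume "\<exists>n::int. \<exists>w\<in>Lam. n > 1 \<and> e19 = (\<lambda>i. n * w i)"
    then obtain n w where n: "n > 1" and hw: "e19 = (\<lambda>i. n * w i)" by blast
    have "n * w 19 = 1" using fun_cong[OF hw, of 19] by (simp add: e19_def)
    then show False using n by (simp add: zmult_eq_1_iff)
  qed
qed

definition z0 :: "nat \<Rightarrow> complex" where
  "z0 i = (if i = 0 \<or> i = 1 then 1 else if i = 2 \<or> i = 3 then \<i> else 0)"

lemma z0_Dvec: "z0 \<in> Dvec"
  unfolding Dvec_def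
proof (intro conjI CollectI)
  show "z0 \<in> LamC" by (simp add: LamC_def z0_def rk_def)
  show "z0 \<noteq> (\<lambda>_. 0)" proof assume "z0 = (\<lambda>_. 0)" then have "z0 0 = 0" by metis then show False by (simp add: z0_def) qed
  show "bilC z0 z0 = 0" by (simp add: bilC_Bg Bg_explicit z0_def)
  show "0 < Re (herm z0 z0)" by (simp add: herm_def bilC_Bg Bg_explicit z0_def)
qed

lemma z0_D: "z0 \<in> Dv h0 \<and> z0 \<in> Dv e19"
  unfolding Dv_def using z0_Dvec
  by (simp add: bilC_Bg Bg_explicit z0_def embC_def h0_def e19_def)

lemma part1: "Hh \<inter> Hu \<noteq> {}"
proof -
  have "F8proj z0 \<in> Hh" unfolding Hh_def using z0_D hyp_h0 by blast
  moreover have "F8proj z0 \<in> Hu" unfolding Hu_def using z0_D uni_e19 by blast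
  ultimately show ?thesis by blast
qed
lemma Bg_sos: fixes w :: "nat \<Rightarrow> real"
  shows "Bg w w + (1/2 * (w 0 - w 1)\<^sup>2 + 1/2 * (w 2 - w 3)\<^sup>2 + 2 * (w 19)\<^sup>2 + 2 * (w 4 + (-1/2) * w 5)\<^sup>2 + (3/2) * (w 5 + (-2/3) * w 6)\<^sup>2 + (4/3) * (w 6 + (-3/4) * w 7)\<^sup>2 + (5/4) * (w 7 + (-4/5) * w 8)\<^sup>2 + (6/5) * (w 8 + (-5/6) * w 9 + (-5/6) * w 11)\<^sup>2 + (7/6) * (w 9 + (-6/7) * w 10 + (-5/7) * w 11)\<^sup>2 + (8/7) * (w 10 + (-5/8) * w 11)\<^sup>2 + (1/8) * (w 11)\<^sup>2 + 2 * (w 12 + (-1/2) * w 13)\<^sup>2 + (3/2) * (w 13 + (-2/3) * w 14)\<^sup>2 + (4/3) * (w 14 + (-3/4) * w 15)\<^sup>2 + (5/4) * (w 15 + (-4/5) * w 16 + (-4/5) * w 18)\<^sup>2 + (6/5) * (w 16 + (-5/6) * w 17 + (-2/3) * w 18)\<^sup>2 + (7/6) * (w 17 + (-4/7) * w 18)\<^sup>2 + (2/7) * (w 18)\<^sup>2) = ((w 0 + w 1)\<^sup>2 + (w 2 + w 3)\<^sup>2) / 2"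
  by (simp add: Bg_explicit power2_eq_square field_simps)

lemma Bg_negdef: fixes w :: "nat \<Rightarrow> real"
  assumes a: "w 0 + w 1 = 0" and b: "w 2 + w 3 = 0"
  shows "Bg w w \<le> 0" and "Bg w w = 0 \<Longrightarrow> (\<forall>i<20. w i = 0)"
proof -
  have S: "Bg w w + (1/2 * (w 0 - w 1)\<^sup>2 + 1/2 * (w 2 - w 3)\<^sup>2 + 2 * (w 19)\<^sup>2 + 2 * (w 4 + (-1/2) * w 5)\<^sup>2 + (3/2) * (w 5 + (-2/3) * w 6)\<^sup>2 + (4/3) * (w 6 + (-3/4) * w 7)\<^sup>2 + (5/4) * (w 7 + (-4/5) * w 8)\<^sup>2 + (6/5) * (w 8 + (-5/6) * w 9 + (-5/6) * w 11)\<^sup>2 + (7/6) * (w 9 + (-6/7) * w 10 + (-5/7) * w 11)\<^sup>2 + (8/7) * (w 10 + (-5/8) * w 11)\<^sup>2 + (1/8) * (w 11)\<^sup>2 + 2 * (w 12 + (-1/2) * w 13)\<^sup>2 + (3/2) * (w 13 + (-2/3) * w 14)\<^sup>2 + (4/3) * (w 14 + (-3/4) * w 15)\<^sup>2 + (5/4) * (w 15 + (-4/5) * w 16 + (-4/5) * w 18)\<^sup>2 + (6/5) * (w 16 + (-5/6) * w 17 + (-2/3) * w 18)\<^sup>2 + (7/6) * (w 17 + (-4/7) * w 18)\<^sup>2 + (2/7) * (w 18)\<^sup>2) = 0" using Bg_sos[of w] a b by simp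
  have n0: "0 \<le> (w 0 - w 1)\<^sup>2" by simp
  have n1: "0 \<le> (w 2 - w 3)\<^sup>2" by simp
  have n2: "0 \<le> (w 19)\<^sup>2" by simp
  have n3: "0 \<le> (w 4 + (-1/2) * w 5)\<^sup>2" by simp
  have n4: "0 \<le> (w 5 + (-2/3) * w 6)\<^sup>2" by simp
  have n5: "0 \<le> (w 6 + (-3/4) * w 7)\<^sup>2" by simp
  have n6: "0 \<le> (w 7 + (-4/5) * w 8)\<^sup>2" by simp
  have n7: "0 \<le> (w 8 + (-5/6) * w 9 + (-5/6) * w 11)\<^sup>2" by simp
  have n8: "0 \<le> (w 9 + (-6/7) * w 10 + (-5/7) * w 11)\<^sup>2" by simp
  have n9: "0 \<le> (w 10 + (-5/8) * w 11)\<^sup>2" by simp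
  have n10: "0 \<le> (w 11)\<^sup>2" by simp
  have n11: "0 \<le> (w 12 + (-1/2) * w 13)\<^sup>2" by simp
  have n12: "0 \<le> (w 13 + (-2/3) * w 14)\<^sup>2" by simp
  have n13: "0 \<le> (w 14 + (-3/4) * w 15)\<^sup>2" by simp
  have n14: "0 \<le> (w 15 + (-4/5) * w 16 + (-4/5) * w 18)\<^sup>2" by simp
  have n15: "0 \<le> (w 16 + (-5/6) * w 17 + (-2/3) * w 18)\<^sup>2" by simp
  have n16: "0 \<le> (w 17 + (-4/7) * w 18)\<^sup>2" by simp
  have n17: "0 \<le> (w 18)\<^sup>2" by simp
  show "Bg w w \<le> 0" using S n0 n1 n2 n3 n4 n5 n6 n7 n8 n9 n10 n11 n12 n13 n14 n15 n16 n17 by linarith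
  assume "Bg w w = 0"
  with S have S: "1/2 * (w 0 - w 1)\<^sup>2 + 1/2 * (w 2 - w 3)\<^sup>2 + 2 * (w 19)\<^sup>2 + 2 * (w 4 + (-1/2) * w 5)\<^sup>2 + (3/2) * (w 5 + (-2/3) * w 6)\<^sup>2 + (4/3) * (w 6 + (-3/4) * w 7)\<^sup>2 + (5/4) * (w 7 + (-4/5) * w 8)\<^sup>2 + (6/5) * (w 8 + (-5/6) * w 9 + (-5/6) * w 11)\<^sup>2 + (7/6) * (w 9 + (-6/7) * w 10 + (-5/7) * w 11)\<^sup>2 + (8/7) * (w 10 + (-5/8) * w 11)\<^sup>2 + (1/8) * (w 11)\<^sup>2 + 2 * (w 12 + (-1/2) * w 13)\<^sup>2 + (3/2) * (w 13 + (-2/3) * w 14)\<^sup>2 + (4/3) * (w 14 + (-3/4) * w 15)\<^sup>2 + (5/4) * (w 15 + (-4/5) * w 16 + (-4/5) * w 18)\<^sup>2 + (6/5) * (w 16 + (-5/6) * w 17 + (-2/3) * w 18)\<^sup>2 + (7/6) * (w 17 + (-4/7) * w 18)\<^sup>2 + (2/7) * (w 18)\<^sup>2 = 0" by simp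
  have z0: "w 0 - w 1 = 0" proof - have "(w 0 - w 1)\<^sup>2 \<le> 0" using S n0 n0 n1 n2 n3 n4 n5 n6 n7 n8 n9 n10 n11 n12 n13 n14 n15 n16 n17 by linarith then show ?thesis by simp qed
  have z1: "w 2 - w 3 = 0" proof - have "(w 2 - w 3)\<^sup>2 \<le> 0" using S n1 n0 n1 n2 n3 n4 n5 n6 n7 n8 n9 n10 n11 n12 n13 n14 n15 n16 n17 by linarith then show ?thesis by simp qed
  have z2: "w 19 = 0" proof - have "(w 19)\<^sup>2 \<le> 0" using S n2 n0 n1 n2 n3 n4 n5 n6 n7 n8 n9 n10 n11 n12 n13 n14 n15 n16 n17 by linarith then show ?thesis by simp qed
  have z3: "w 4 + (-1/2) * w 5 = 0" proof - have "(w 4 + (-1/2) * w 5)\<^sup>2 \<le> 0" using S n3 n0 n1 n2 n3 n4 n5 n6 n7 n8 n9 n10 n11 n12 n13 n14 n15 n16 n17 by linarith then show ?thesis by simp qed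
  have z4: "w 5 + (-2/3) * w 6 = 0" proof - have "(w 5 + (-2/3) * w 6)\<^sup>2 \<le> 0" using S n4 n0 n1 n2 n3 n4 n5 n6 n7 n8 n9 n10 n11 n12 n13 n14 n15 n16 n17 by linarith then show ?thesis by simp qed
  have z5: "w 6 + (-3/4) * w 7 = 0" proof - have "(w 6 + (-3/4) * w 7)\<^sup>2 \<le> 0" using S n5 n0 n1 n2 n3 n4 n5 n6 n7 n8 n9 n10 n11 n12 n13 n14 n15 n16 n17 by linarith then show ?thesis by simp qed
  have z6: "w 7 + (-4/5) * w 8 = 0" proof - have "(w 7 + (-4/5) * w 8)\<^sup>2 \<le> 0" using S n6 n0 n1 n2 n3 n4 n5 n6 n7 n8 n9 n10 n11 n12 n13 n14 n15 n16 n17 by linarith then show ?thesis by simp qed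
  have z7: "w 8 + (-5/6) * w 9 + (-5/6) * w 11 = 0" proof - have "(w 8 + (-5/6) * w 9 + (-5/6) * w 11)\<^sup>2 \<le> 0" using S n7 n0 n1 n2 n3 n4 n5 n6 n7 n8 n9 n10 n11 n12 n13 n14 n15 n16 n17 by linarith then show ?thesis by simp qed
  have z8: "w 9 + (-6/7) * w 10 + (-5/7) * w 11 = 0" proof - have "(w 9 + (-6/7) * w 10 + (-5/7) * w 11)\<^sup>2 \<le> 0" using S n8 n0 n1 n2 n3 n4 n5 n6 n7 n8 n9 n10 n11 n12 n13 n14 n15 n16 n17 by linarith then show ?thesis by simp qed
  have z9: "w 10 + (-5/8) * w 11 = 0" proof - have "(w 10 + (-5/8) * w 11)\<^sup>2 \<le> 0" using S n9 n0 n1 n2 n3 n4 n5 n6 n7 n8 n9 n10 n11 n12 n13 n14 n15 n16 n17 by linarith then show ?thesis by simp qed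
  have z10: "w 11 = 0" proof - have "(w 11)\<^sup>2 \<le> 0" using S n10 n0 n1 n2 n3 n4 n5 n6 n7 n8 n9 n10 n11 n12 n13 n14 n15 n16 n17 by linarith then show ?thesis by simp qed
  have z11: "w 12 + (-1/2) * w 13 = 0" proof - have "(w 12 + (-1/2) * w 13)\<^sup>2 \<le> 0" using S n11 n0 n1 n2 n3 n4 n5 n6 n7 n8 n9 n10 n11 n12 n13 n14 n15 n16 n17 by linarith then show ?thesis by simp qed
  have z12: "w 13 + (-2/3) * w 14 = 0" proof - have "(w 13 + (-2/3) * w 14)\<^sup>2 \<le> 0" using S n12 n0 n1 n2 n3 n4 n5 n6 n7 n8 n9 n10 n11 n12 n13 n14 n15 n16 n17 by linarith then show ?thesis by simp qed
  have z13: "w 14 + (-3/4) * w 15 = 0" proof - have "(w 14 + (-3/4) * w 15)\<^sup>2 \<le> 0" using S n13 n0 n1 n2 n3 n4 n5 n6 n7 n8 n9 n10 n11 n12 n13 n14 n15 n16 n17 by linarith then show ?thesis by simp qed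
  have z14: "w 15 + (-4/5) * w 16 + (-4/5) * w 18 = 0" proof - have "(w 15 + (-4/5) * w 16 + (-4/5) * w 18)\<^sup>2 \<le> 0" using S n14 n0 n1 n2 n3 n4 n5 n6 n7 n8 n9 n10 n11 n12 n13 n14 n15 n16 n17 by linarith then show ?thesis by simp qed
  have z15: "w 16 + (-5/6) * w 17 + (-2/3) * w 18 = 0" proof - have "(w 16 + (-5/6) * w 17 + (-2/3) * w 18)\<^sup>2 \<le> 0" using S n15 n0 n1 n2 n3 n4 n5 n6 n7 n8 n9 n10 n11 n12 n13 n14 n15 n16 n17 by linarith then show ?thesis by simp qed
  have z16: "w 17 + (-4/7) * w 18 = 0" proof - have "(w 17 + (-4/7) * w 18)\<^sup>2 \<le> 0" using S n16 n0 n1 n2 n3 n4 n5 n6 n7 n8 n9 n10 n11 n12 n13 n14 n15 n16 n17 by linarith then show ?thesis by simp qed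
  have z17: "w 18 = 0" proof - have "(w 18)\<^sup>2 \<le> 0" using S n17 n0 n1 n2 n3 n4 n5 n6 n7 n8 n9 n10 n11 n12 n13 n14 n15 n16 n17 by linarith then show ?thesis by simp qed
  have "w 0 = 0 \<and> w 1 = 0 \<and> w 2 = 0 \<and> w 3 = 0" using z0 z1 a b by linarith
  moreover have "w 11 = 0 \<and> w 10 = 0 \<and> w 9 = 0 \<and> w 8 = 0 \<and> w 7 = 0 \<and> w 6 = 0 \<and> w 5 = 0 \<and> w 4 = 0"
    using z3 z4 z5 z6 z7 z8 z9 z10 by linarith
  moreover have "w 18 = 0 \<and> w 17 = 0 \<and> w 16 = 0 \<and> w 15 = 0 \<and> w 14 = 0 \<and> w 13 = 0 \<and> w 12 = 0 \<and> w 19 = 0"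
    using z11 z12 z13 z14 z15 z16 z17 z2 by linarith
  ultimately show "\<forall>i<20. w i = 0" by (auto simp: less_Suc_eq eval_nat_numeral)
qed

lemma Bg_upper: fixes w :: "nat \<Rightarrow> real"
  shows "Bg w w \<le> ((w 0 + w 1)\<^sup>2 + (w 2 + w 3)\<^sup>2) / 2"
proof -
  define v where "v = (\<lambda>i. w i - (if i = 0 then (w 0 + w 1)/2 else if i = 1 then (w 0 + w 1)/2
     else if i = 2 then (w 2 + w 3)/2 else if i = 3 then (w 2 + w 3) / 2 else 0))"
  have "v 0 + v 1 = 0" "v 2 + v 3 = 0" by (simp_all add: v_def)
  then have "Bg v v \<le> 0" by (rule Bg_negdef(1))
  moreover have "Bg w w = Bg v v + ((w 0 + w 1)\<^sup>2 + (w 2 + w 3)\<^sup>2) / 2"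
    by (simp add: Bg_explicit v_def power2_eq_square field_simps)
  ultimately show ?thesis by linarith
qed

lemma real_key: fixes x y u :: "nat \<Rightarrow> real"
  assumes xy: "Bg x y = 0" and xx: "Bg x x = p" and yy: "Bg y y = p" and p: "p > 0"
    and xu: "Bg x u = 0" and yu: "Bg y u = 0" and uu: "Bg u u \<ge> 0"
  shows "\<forall>i<20. u i = 0"
proof -
  have yx: "Bg y x = 0" and ux: "Bg u x = 0" and uy: "Bg u y = 0"
    using xy xu yu Bg_sym by metis+
  define A where "A = x 0 + x 1"
  define B where "B = x 2 + x 3"
  define C where "C = y 0 + y 1"
  define D where "D = y 2 + y 3"
  have bound: "2*p*(al\<^sup>2+be\<^sup>2) \<le> (al*A+be*C)\<^sup>2 + (al*B+be*D)\<^sup>2" for al be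
  proof -
    define w where "w = (\<lambda>i. al * x i + be * y i)"
    have "Bg w w = p*(al\<^sup>2+be\<^sup>2)"
      unfolding w_def by (simp add: Bg_add_left Bg_add_right Bg_smult_left Bg_smult_right xx yy xy yx power2_eq_square algebra_simps)
    moreover have "w 0 + w 1 = al*A+be*C" "w 2 + w 3 = al*B+be*D"
      by (simp_all add: w_def A_def B_def C_def D_def algebra_simps)
    ultimately show ?thesis using Bg_upper[of w] by simp
  qed
  have det: "A*D - B*C \<noteq> 0"
  proof
    assume d: "A*D - B*C = 0"
    have "2*p*(C\<^sup>2+(-A)\<^sup>2) \<le> (C*A+(-A)*C)\<^sup>2 + (C*B+(-A)*D)\<^sup>2" by (rule bound)
    also have "\<dots> = 0" using d by (simp add: algebra_simps)
    finally have "C\<^sup>2+A\<^sup>2 \<le> 0" using p by (simp add: mult_le_0_iff)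
    then have AC: "A = 0" "C = 0" by (smt (verit) zero_le_power2 zero_eq_power2)+
    have "2*p*(D\<^sup>2+(-B)\<^sup>2) \<le> (D*A+(-B)*C)\<^sup>2 + (D*B+(-B)*D)\<^sup>2" by (rule bound)
    also have "\<dots> = 0" using AC by (simp add: algebra_simps)
    finally have "D\<^sup>2+B\<^sup>2 \<le> 0" using p by (simp add: mult_le_0_iff)
    then have BD: "B = 0" "D = 0" by (smt (verit) zero_le_power2 zero_eq_power2)+
    have "2*p*(1\<^sup>2+0\<^sup>2) \<le> (1*A+0*C)\<^sup>2 + (1*B+0*D)\<^sup>2" by (rule bound)
    then show False using AC BD p by simp
  qed
  define au where "au = u 0 + u 1"
  define bu where "bu = u 2 + u 3"
  define al where "al = (au * D - bu * C) / (A*D - B*C)"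
  define be where "be = (A * bu - B * au) / (A*D - B*C)"
  define w where "w = (\<lambda>i. u i - al * x i - be * y i)"
  have "w 0 + w 1 = au - al*A - be*C" "w 2 + w 3 = bu - al*B - be*D"
    by (simp_all add: w_def A_def B_def C_def D_def au_def bu_def algebra_simps)
  moreover have "au - al*A - be*C = 0" "bu - al*B - be*D = 0"
    using det by (simp_all add: al_def be_def field_simps)
  ultimately have w01: "w 0 + w 1 = 0" and w23: "w 2 + w 3 = 0" by simp_all
  have ww: "Bg w w = Bg u u + p*(al\<^sup>2+be\<^sup>2)"
    unfolding w_def by (simp only: Bg_diff_left Bg_diff_right Bg_smult_left Bg_smult_right xx yy xy yx xu yu ux uy) (simp add: power2_eq_square algebra_simps)
  have "Bg w w \<le> 0" by (rule Bg_negdef(1)[OF w01 w23])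
  moreover have "p*(al\<^sup>2+be\<^sup>2) \<ge> 0" using p by simp
  ultimately have "Bg w w = 0" and "p*(al\<^sup>2+be\<^sup>2) = 0" using ww uu by linarith+
  then have w0: "\<forall>i<20. w i = 0" and "al\<^sup>2+be\<^sup>2 = 0" using Bg_negdef(2)[OF w01 w23] p by simp_all
  then have "al = 0" "be = 0" by (smt (verit) zero_le_power2 zero_eq_power2)+
  with w0 show ?thesis by (simp add: w_def)
qed
lemma Bg_diag_even: fixes x :: "nat \<Rightarrow> int" shows "Bg x x = 2 * (x 0 * x 1 + x 2 * x 3 + x 4 * x 5 + x 5 * x 6 + x 6 * x 7 + x 7 * x 8 + x 8 * x 9 + x 9 * x 10 + x 8 * x 11 + x 12 * x 13 + x 13 * x 14 + x 14 * x 15 + x 15 * x 16 + x 16 * x 17 + x 15 * x 18 - (x 4 * x 4 + x 5 * x 5 + x 6 * x 6 + x 7 * x 7 + x 8 * x 8 + x 9 * x 9 + x 10 * x 10 + x 11 * x 11 + x 12 * x 12 + x 13 * x 13 + x 14 * x 14 + x 15 * x 15 + x 16 * x 16 + x 17 * x 17 + x 18 * x 18 + x 19 * x 19))"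
  by (simp add: Bg_explicit algebra_simps)
lemma div2_form:
  fixes v :: "nat \<Rightarrow> int"
  assumes L: "v \<in> Lam" and ev0: "\<forall>x\<in>Lam. even (Bg v x)" and n: "Bg v v = -2"
  shows "\<exists>w. v = (\<lambda>i. 2 * w i + e19 i)"
proof -
  define e where "e k = (\<lambda>i. if i = k then (1::int) else 0)" for k :: nat
  have ev: "even (Bg v (e k))" if "k < 20" for k
    using ev0 that by (simp add: e_def Lam_def rk_def)
  have r0: "even (v 1)" using ev[of 0] by (simp add: Bg_explicit e_def)
  have r1: "even (v 0)" using ev[of 1] by (simp add: Bg_explicit e_def)
  have r2: "even (v 3)" using ev[of 2] by (simp add: Bg_explicit e_def)
  have r3: "even (v 2)" using ev[of 3] by (simp add: Bg_explicit e_def)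
  have r4: "even (-2 * v 4 + v 5)" using ev[of 4] by (simp add: Bg_explicit e_def)
  have r5: "even (v 4 + -2 * v 5 + v 6)" using ev[of 5] by (simp add: Bg_explicit e_def)
  have r6: "even (v 5 + -2 * v 6 + v 7)" using ev[of 6] by (simp add: Bg_explicit e_def)
  have r7: "even (v 6 + -2 * v 7 + v 8)" using ev[of 7] by (simp add: Bg_explicit e_def)
  have r8: "even (v 7 + -2 * v 8 + v 9 + v 11)" using ev[of 8] by (simp add: Bg_explicit e_def)
  have r9: "even (v 8 + -2 * v 9 + v 10)" using ev[of 9] by (simp add: Bg_explicit e_def)
  have r10: "even (v 9 + -2 * v 10)" using ev[of 10] by (simp add: Bg_explicit e_def)
  have r11: "even (v 8 + -2 * v 11)" using ev[of 11] by (simp add: Bg_explicit e_def)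
  have r12: "even (-2 * v 12 + v 13)" using ev[of 12] by (simp add: Bg_explicit e_def)
  have r13: "even (v 12 + -2 * v 13 + v 14)" using ev[of 13] by (simp add: Bg_explicit e_def)
  have r14: "even (v 13 + -2 * v 14 + v 15)" using ev[of 14] by (simp add: Bg_explicit e_def)
  have r15: "even (v 14 + -2 * v 15 + v 16 + v 18)" using ev[of 15] by (simp add: Bg_explicit e_def)
  have r16: "even (v 15 + -2 * v 16 + v 17)" using ev[of 16] by (simp add: Bg_explicit e_def)
  have r17: "even (v 16 + -2 * v 17)" using ev[of 17] by (simp add: Bg_explicit e_def)
  have r18: "even (v 15 + -2 * v 18)" using ev[of 18] by (simp add: Bg_explicit e_def)
  have r19: "even (-2 * v 19)" using ev[of 19] by (simp add: Bg_explicit e_def)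

  have pa: "even (v 0)" "even (v 1)" "even (v 2)" "even (v 3)" "even (v 5)" "even (v 9)" "even (v 8)"
     "even (v 13)" "even (v 16)" "even (v 15)"
    using r0 r1 r2 r3 r4 r10 r11 r12 r17 r18 by presburger+
  have pb: "even (v 10)" "even (v 7)" "even (v 17)" using r9 r6 r16 pa by presburger+
  have pc: "even (v 11)" "even (v 6)" using r8 r7 pa pb by presburger+
  have pd: "even (v 4)" using r5 pc by presburger
  have pe: "even (v 14 - v 12)" "even (v 18 - v 12)" using r13 r15 pa by presburger+
  define eps where "eps = v 12 mod 2"
  define del where "del = v 19 mod 2"
  have eps01: "eps = 0 \<or> eps = 1" and del01: "del = 0 \<or> del = 1" unfolding eps_def del_def by presburger+
  define w where "w i = (v i - eps * h0 i - del * e19 i) div 2" for i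
  have vi: "v i = 2 * w i + eps * h0 i + del * e19 i" for i
  proof (cases "i < 20")
    case True
    have "even (v i - eps * h0 i - del * e19 i)"
      using True pa pb pc pd pe eps01 del01 unfolding eps_def del_def
      by (auto simp: less_Suc_eq eval_nat_numeral h0_def e19_def)
    then show ?thesis unfolding w_def by simp
  next
    case False
    then show ?thesis using L by (simp add: w_def Lam_def rk_def h0_def e19_def)
  qed
  then have vw: "v = (\<lambda>i. 2 * w i + eps * h0 i + del * e19 i)" by (intro ext) simp
  have hh: "Bg h0 h0 = -6" "Bg h0 e19 = 0" "Bg e19 h0 = 0" "Bg e19 e19 = -2"
    "Bg h0 w = -2 * w 12" "Bg w h0 = -2 * w 12" "Bg e19 w = -2 * w 19" "Bg w e19 = -2 * w 19"
    by (simp_all add: h0_bil e19_bil h0_def e19_def Bg_sym[of w])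
  obtain q where wq: "Bg w w = 2 * q" using Bg_diag_even by blast
  have "Bg v v = 8 * q - 8 * eps * w 12 - 8 * del * w 19 - 6 * eps * eps - 2 * del * del"
    unfolding vw by (simp only: Bg_add_left Bg_add_right Bg_smult_left Bg_smult_right hh wq)
  with n have "-2 = 8 * q - 8 * eps * w 12 - 8 * del * w 19 - 6 * eps * eps - 2 * del * del" by simp
  with eps01 del01 have "eps = 0 \<and> del = 1" by (elim disjE) (simp_all, presburger+)
  then show ?thesis using vw by auto
qed

lemma mod4_lemma:
  fixes w1 w2 :: "nat \<Rightarrow> int"
  shows "Bg (\<lambda>i. 2 * w1 i + e19 i) (\<lambda>i. 2 * w2 i + e19 i) mod 4 = 2"
proof -
  have hh: "Bg e19 e19 = -2" "Bg e19 w2 = -2 * w2 19" "Bg w1 e19 = -2 * w1 19"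
    by (simp_all add: e19_bil e19_def Bg_sym[of w1])
  have "Bg (\<lambda>i. 2 * w1 i + e19 i) (\<lambda>i. 2 * w2 i + e19 i) = 4 * Bg w1 w2 - 4 * w1 19 - 4 * w2 19 - 2"
    by (simp only: Bg_add_left Bg_add_right Bg_smult_left Bg_smult_right hh)
  then show ?thesis by presburger
qed

lemma orbit_props:
  assumes "v \<in> unigonal_orbit"
  shows "v \<in> Lam \<and> (\<forall>x\<in>Lam. even (Bg v x)) \<and> Bg v v = -2"
proof -
  obtain g v0 where v: "v = act g v0" and g: "g \<in> Gamma" and u: "unigonal v0"
    using assms unfolding unigonal_orbit_def by blast
  have bij: "bij_betw (act g) Lam Lam" and pres: "\<forall>x\<in>Lam. \<forall>y\<in>Lam. bil (act g x) (act g y) = bil x y"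
    using g unfolding Gamma_def by blast+
  have v0L: "v0 \<in> Lam" using u unfolding unigonal_def primitive_def by blast
  have vL: "v \<in> Lam" using bij v0L v by (simp add: bij_betw_apply)
  have "even (Bg v x)" if x: "x \<in> Lam" for x
  proof -
    obtain y where y: "y \<in> Lam" "x = act g y" using bij x by (metis bij_betw_iff_bijections)
    have "Bg v x = bil v0 y" using pres v0L y v by (simp add: bil_Bg)
    moreover have "bil v0 y \<in> {2 * k |k. True}" using u y unfolding unigonal_def divisor_is_def by blast
    ultimately show ?thesis by auto
  qed
  moreover have "Bg v v = -2" using pres v0L u v unfolding unigonal_def by (simp add: bil_Bg)
  ultimately show ?thesis using vL by blast
qed
lemma cplx_decomp:
  fixes z :: "nat \<Rightarrow> complex" and v :: "nat \<Rightarrow> int"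
  defines "x \<equiv> \<lambda>i. Re (z i)" and "y \<equiv> \<lambda>i. Im (z i)"
  shows "Bg z z = of_real (Bg x x - Bg y y) + \<i> * of_real (2 * Bg x y)"
    and "herm z z = of_real (Bg x x + Bg y y) + \<i> * of_real (Bg y x - Bg x y)"
    and "bilC z (embC v) = of_real (Bg x (\<lambda>i. of_int (v i))) + \<i> * of_real (Bg y (\<lambda>i. of_int (v i)))"
proof -
  have zd: "z = (\<lambda>i. of_real (x i) + \<i> * of_real (y i))"
    by (intro ext) (simp add: x_def y_def complex_eq)
  have cz: "(\<lambda>i. cnj (z i)) = (\<lambda>i. of_real (x i) - \<i> * of_real (y i))"
    by (intro ext) (simp add: x_def y_def complex_eq_iff)
  have ev: "embC v = (\<lambda>i. of_real (of_int (v i)))" by (simp add: embC_def)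
  have sxy: "Bg y x = Bg x y" by (rule Bg_sym)
  show "Bg z z = of_real (Bg x x - Bg y y) + \<i> * of_real (2 * Bg x y)"
    apply (subst zd)+
    apply (simp only: Bg_add_left Bg_add_right Bg_smult_left Bg_smult_right Bg_of_real sxy)
    apply (simp add: algebra_simps)
    done
  show "herm z z = of_real (Bg x x + Bg y y) + \<i> * of_real (Bg y x - Bg x y)"
    unfolding herm_def bilC_Bg cz
    apply (subst zd)
    apply (simp only: Bg_add_left Bg_diff_right Bg_add_right Bg_smult_left Bg_smult_right Bg_of_real)
    apply (simp add: algebra_simps)
    done
  show "bilC z (embC v) = of_real (Bg x (\<lambda>i. of_int (v i))) + \<i> * of_real (Bg y (\<lambda>i. of_int (v i)))"
    unfolding bilC_Bg ev
    apply (subst zd)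
    apply (simp only: Bg_add_left Bg_smult_left Bg_of_real)
    done
qed

lemma part2: "Hu_self 2 = {}"
proof -
  have contra: False if vs0: "vs 0 \<in> unigonal_orbit" and vs1: "vs 1 \<in> unigonal_orbit"
    and li: "lin_indep 2 vs" and z1: "z \<in> Dv (vs 0)" and z2: "z \<in> Dv (vs 1)" for vs z
  proof -
    define v1 where "v1 = vs 0"
    define v2 where "v2 = vs 1"
    have P1: "v1 \<in> Lam" "\<forall>x\<in>Lam. even (Bg v1 x)" "Bg v1 v1 = -2" using orbit_props[OF vs0] v1_def by auto
    have P2: "v2 \<in> Lam" "\<forall>x\<in>Lam. even (Bg v2 x)" "Bg v2 v2 = -2" using orbit_props[OF vs1] v2_def by auto
    obtain w1 where w1: "v1 = (\<lambda>i. 2 * w1 i + e19 i)" using div2_form[OF P1] by blast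
    obtain w2 where w2: "v2 = (\<lambda>i. 2 * w2 i + e19 i)" using div2_form[OF P2] by blast
    define m where "m = Bg v1 v2"
    have m4: "m mod 4 = 2" unfolding m_def w1 w2 by (rule mod4_lemma)
    define s :: int where "s = (if m \<ge> 0 then 1 else -1)"
    define u where "u = (\<lambda>i. v1 i + s * v2 i)"
    have "Bg u u = Bg v1 v1 + 2 * s * m + s * s * Bg v2 v2"
      unfolding u_def m_def by (simp only: Bg_add_left Bg_add_right Bg_smult_left Bg_smult_right Bg_sym[of v2 v1])
    also have "\<dots> \<ge> 0" using P1 P2 m4 unfolding s_def by (cases "m \<ge> 0") (simp_all, presburger+)
    finally have uu: "Bg u u \<ge> 0" .
    have "\<exists>i. u i \<noteq> 0"
    proof (rule ccontr)
      assume "\<not> (\<exists>i. u i \<noteq> 0)"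
      then have "\<forall>i. (\<Sum>k<2. (if k = 0 then 1 else s) * vs k i) = 0"
        by (simp add: u_def v1_def v2_def eval_nat_numeral)
      moreover have "(\<forall>i. (\<Sum>k<2. (if k = 0 then 1 else s) * vs k i) = 0) \<longrightarrow> (\<forall>k::nat<2. (if k = 0 then (1::int) else s) = 0)"
        using li unfolding lin_indep_def by (rule spec)
      ultimately have "\<forall>k::nat<2. (if k = 0 then (1::int) else s) = 0" by blast
      then have "(if (0::nat) = 0 then (1::int) else s) = 0" using pos2 by blast
      then show False by simp
    qed
    then obtain i where ui: "u i \<noteq> 0" by blast
    have i20: "i < 20" using ui P1(1) P2(1) by (cases "i < 20") (auto simp: u_def Lam_def rk_def)
    define x where "x = (\<lambda>i. Re (z i))"
    define y where "y = (\<lambda>i. Im (z i))"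
    have zD: "z \<in> Dvec" using z1 unfolding Dv_def by blast
    have "bilC z z = 0" "Re (herm z z) > 0" using zD unfolding Dvec_def by auto
    then have "Bg z z = 0" by (simp add: bilC_Bg)
    then have e1: "Bg x x = Bg y y" "Bg x y = 0"
      using cplx_decomp(1)[of z] unfolding x_def y_def by (simp_all add: complex_eq_iff)
    have e2: "Bg x x + Bg y y > 0" using \<open>Re (herm z z) > 0\<close> cplx_decomp(2)[of z] unfolding x_def y_def by simp
    have "bilC z (embC v1) = 0" "bilC z (embC v2) = 0" using z1 z2 unfolding Dv_def v1_def v2_def by auto
    then have e3: "Bg x (\<lambda>i. of_int (v1 i)) = 0" "Bg y (\<lambda>i. of_int (v1 i)) = 0"
       "Bg x (\<lambda>i. of_int (v2 i)) = 0" "Bg y (\<lambda>i. of_int (v2 i)) = 0"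
      using cplx_decomp(3)[of z v1] cplx_decomp(3)[of z v2] unfolding x_def y_def by (simp_all add: complex_eq_iff)
    define ur where "ur = (\<lambda>i. (of_int (u i) :: real))"
    have urd: "ur = (\<lambda>i. of_int (v1 i) + of_int s * of_int (v2 i))" by (simp add: ur_def u_def)
    have "Bg x ur = 0" "Bg y ur = 0" unfolding urd by (simp_all only: Bg_add_right Bg_smult_right e3)
    moreover have "Bg ur ur \<ge> 0" unfolding ur_def Bg_of_int using uu by simp
    moreover have p: "Bg x x > 0" using e1 e2 by linarith
    ultimately have "\<forall>i<20. ur i = 0"
      using real_key[OF e1(2) refl e1(1)[symmetric] p] by blast
    then show False using i20 ui by (simp add: ur_def)
  qed
  have "(\<Union>vs\<in>{vs. (\<forall>k<2. vs k \<in> unigonal_orbit) \<and> lin_indep 2 vs}. (\<Inter>k<2. Dv (vs k)) \<inter> Dvec) = {}"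
  proof (intro equals0I)
    fix z assume "z \<in> (\<Union>vs\<in>{vs. (\<forall>k<2. vs k \<in> unigonal_orbit) \<and> lin_indep 2 vs}. (\<Inter>k<2. Dv (vs k)) \<inter> Dvec)"
    then obtain vs where vs: "\<forall>k<2. vs k \<in> unigonal_orbit" "lin_indep 2 vs" "z \<in> (\<Inter>k<2. Dv (vs k))" by blast
    have "vs 0 \<in> unigonal_orbit" "vs 1 \<in> unigonal_orbit" using vs(1) by auto
    moreover have "z \<in> Dv (vs 0)" "z \<in> Dv (vs 1)" using vs(3) by auto
    ultimately show False using contra vs(2) by blast
  qed
  then show ?thesis unfolding Hu_self_def by simp
qed

theorem mainTheorem13:
  shows "Hh \<inter> Hu \<noteq> {} \<and> Hu_self 2 = {}"
  using part1 part2 by blast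

end
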